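(* Let $k$ be a field and $V$ a $k$-vector space of dimension $n>1$. Define $b:(k\oplus V)\times(k\oplus V)\to V$ by $b(\alpha\oplus u,\beta\oplus v)=\alpha v-\beta u$. Then $b$ is alternating and $$\operatorname{Adj}(b)\cong\left\{\begin{bmatrix}\alpha1_k & h\\ 0 & \beta 1_V\end{bmatrix}: h\in\hom(k,V),\ \alpha,\beta\in k\right\},$$ acting on $k\oplus V$ by matrix multiplication, with involution $\begin{bmatrix}\alpha1_k & h\\ 0&\beta1_V\end{bmatrix}^*=\begin{bmatrix}\beta1_k&-h\\0&\alpha1_V\end{bmatrix}$. In particular the Jacobson radical of $\operatorname{Adj}(b)$ is $\left\{\begin{bmatrix}0&h\\0&0\end{bmatrix}:h\in\hom(k,V)\right\}$, $\operatorname{Adj}(b)/\operatorname{rad}\operatorname{Adj}(b)\cong k\oplus k$ with the exchange involution $(x,y)\mapsto(y,x)$, and $b$ is $\perp$-indecomposable (of exchange type).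
   Context: $\operatorname{Adj}(b)$ is the set of $f\in\operatorname{End}(k\oplus V)$ for which there is $f^*$ with $b(uf,v)=b(u,vf^* )$ for all $u,v$, with involution $f\mapsto f^*$. $b$ is $\perp$-indecomposable if $k\oplus V$ has no decomposition into a set $\mathcal{X}\neq\{k\oplus V\}$ of pairwise $b$-orthogonal subspaces generating the space with no proper subset generating it. *)

theory Defs
  imports Main "HOL.Vector_Spaces" "HOL-Library.Product_Plus" "HOL-Algebra.QuotRing"
begin

text \<open>The space k (+) V is modelled as the product type 'a \<times> 'v, where 'a is the field k
  and 'v carries the k-vector space structure given by the scalar multiplication s.\<close>

definition pscale :: "('a::field \<Rightarrow> 'v::ab_group_add \<Rightarrow> 'v) \<Rightarrow> 'a \<Rightarrow> 'a \<times> 'v \<Rightarrow> 'a \<times> 'v" where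
  "pscale s c w = (c * fst w, s c (snd w))"

definition bmap :: "('a::field \<Rightarrow> 'v::ab_group_add \<Rightarrow> 'v) \<Rightarrow> 'a \<times> 'v \<Rightarrow> 'a \<times> 'v \<Rightarrow> 'v" where
  "bmap s w w' = s (fst w) (snd w') - s (fst w') (snd w)"

text \<open>End(k (+) V): k-linear endomorphisms. Maps act on the right: u f is written f u.\<close>
definition End :: "('a::field \<Rightarrow> 'v::ab_group_add \<Rightarrow> 'v) \<Rightarrow> ('a \<times> 'v \<Rightarrow> 'a \<times> 'v) set" where
  "End s = {f. Vector_Spaces.linear (pscale s) (pscale s) f}"

definition is_adj :: "('w \<Rightarrow> 'w \<Rightarrow> 'c) \<Rightarrow> ('w \<Rightarrow> 'w) \<Rightarrow> ('w \<Rightarrow> 'w) \<Rightarrow> bool" where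
  "is_adj b f g \<longleftrightarrow> (\<forall>u v. b (f u) v = b u (g v))"

definition Adj :: "('a::field \<Rightarrow> 'v::ab_group_add \<Rightarrow> 'v) \<Rightarrow> ('a \<times> 'v \<Rightarrow> 'a \<times> 'v \<Rightarrow> 'c)
    \<Rightarrow> ('a \<times> 'v \<Rightarrow> 'a \<times> 'v) set" where
  "Adj s b = {f \<in> End s. \<exists>g \<in> End s. is_adj b f g}"

definition adj_star :: "('a::field \<Rightarrow> 'v::ab_group_add \<Rightarrow> 'v) \<Rightarrow> ('a \<times> 'v \<Rightarrow> 'a \<times> 'v \<Rightarrow> 'c)
    \<Rightarrow> ('a \<times> 'v \<Rightarrow> 'a \<times> 'v) \<Rightarrow> ('a \<times> 'v \<Rightarrow> 'a \<times> 'v)" where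
  "adj_star s b f = (THE g. g \<in> End s \<and> is_adj b f g)"

text \<open>Adj(b) as a ring (HOL-Algebra record). Since maps act on the right,
  the product f g is "first f, then g", i.e. g \<circ> f.\<close>
definition Adj_ring :: "('a::field \<Rightarrow> 'v::ab_group_add \<Rightarrow> 'v) \<Rightarrow> ('a \<times> 'v \<Rightarrow> 'a \<times> 'v \<Rightarrow> 'c)
    \<Rightarrow> ('a \<times> 'v \<Rightarrow> 'a \<times> 'v) ring" where
  "Adj_ring s b = \<lparr>carrier = Adj s b, mult = (\<lambda>f g. g \<circ> f), one = id,
     zero = (\<lambda>w. (0, 0)), add = (\<lambda>f g w. (fst (f w) + fst (g w), snd (f w) + snd (g w)))\<rparr>"

text \<open>The matrix [alpha 1_k, h; 0, beta 1_V] (h \<in> hom(k,V) identified with h(1) \<in> V),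
  acting on row vectors (x, u) by right multiplication: (x, u) \<mapsto> (x alpha, x h + u beta).\<close>
definition tri :: "('a::field \<Rightarrow> 'v::ab_group_add \<Rightarrow> 'v) \<Rightarrow> 'a \<Rightarrow> 'v \<Rightarrow> 'a \<Rightarrow> 'a \<times> 'v \<Rightarrow> 'a \<times> 'v" where
  "tri s \<alpha> h \<beta> w = (fst w * \<alpha>, s (fst w) h + s \<beta> (snd w))"

definition left_ideal :: "'a set \<Rightarrow> ('a, 'b) ring_scheme \<Rightarrow> bool" where
  "left_ideal I R \<longleftrightarrow> additive_subgroup I R \<and> (\<forall>a \<in> carrier R. \<forall>x \<in> I. a \<otimes>\<^bsub>R\<^esub> x \<in> I)"

definition maximal_left_ideal :: "'a set \<Rightarrow> ('a, 'b) ring_scheme \<Rightarrow> bool" where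
  "maximal_left_ideal I R \<longleftrightarrow> left_ideal I R \<and> I \<noteq> carrier R \<and>
     (\<forall>J. left_ideal J R \<and> I \<subseteq> J \<longrightarrow> J = I \<or> J = carrier R)"

definition jacobson_radical :: "('a, 'b) ring_scheme \<Rightarrow> 'a set" where
  "jacobson_radical R = {x \<in> carrier R. \<forall>I. maximal_left_ideal I R \<longrightarrow> x \<in> I}"

definition kk_ring :: "('a::field \<times> 'a) ring" where
  "kk_ring = \<lparr>carrier = UNIV, mult = (\<lambda>p q. (fst p * fst q, snd p * snd q)), one = (1, 1),
     zero = (0, 0), add = (\<lambda>p q. (fst p + fst q, snd p + snd q))\<rparr>"

definition exch :: "'a \<times> 'a \<Rightarrow> 'a \<times> 'a" where
  "exch p = (snd p, fst p)"

definition alternating :: "('w \<Rightarrow> 'w \<Rightarrow> 'v::zero) \<Rightarrow> bool" where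
  "alternating b \<longleftrightarrow> (\<forall>w. b w w = 0)"

definition perp_indecomposable :: "('a::field \<Rightarrow> 'v::ab_group_add \<Rightarrow> 'v)
    \<Rightarrow> ('a \<times> 'v \<Rightarrow> 'a \<times> 'v \<Rightarrow> 'c::zero) \<Rightarrow> bool" where
  "perp_indecomposable s b \<longleftrightarrow>
     \<not> (\<exists>X. X \<noteq> {UNIV} \<and>
          (\<forall>S \<in> X. module.subspace (pscale s) S) \<and>
          (\<forall>S \<in> X. \<forall>T \<in> X. S \<noteq> T \<longrightarrow> (\<forall>x \<in> S. \<forall>y \<in> T. b x y = 0)) \<and>
          module.span (pscale s) (\<Union>X) = UNIV \<and>
          (\<forall>Y. Y \<subset> X \<longrightarrow> module.span (pscale s) (\<Union>Y) \<noteq> UNIV))"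

end

theory Submission
  imports Defs
begin

context vector_space begin

lemma vs_pscale: "vector_space (pscale scale)"
  unfolding vector_space_def pscale_def
  by (auto simp: algebra_simps scale_right_distrib scale_left_distrib)

lemma tri_lin: "Vector_Spaces.linear (pscale scale) (pscale scale) (tri scale a h b)"
  unfolding Vector_Spaces.linear_def module_hom_def module_hom_axioms_def module_iff_vector_space
  using vs_pscale
  by (auto simp: pscale_def tri_def algebra_simps scale_right_distrib scale_left_distrib)

lemma tri_End: "tri scale a h b \<in> End scale"
  using tri_lin by (simp add: End_def)

lemma tri_comp: "tri scale a2 h2 b2 \<circ> tri scale a1 h1 b1 = tri scale (a1*a2) (scale a1 h2 + scale b2 h1) (b1*b2)"
  by (auto simp: tri_def fun_eq_iff algebra_simps scale_right_distrib mult.commute)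

lemma tri_add: "(\<lambda>w. (fst (tri scale a1 h1 b1 w) + fst (tri scale a2 h2 b2 w), snd (tri scale a1 h1 b1 w) + snd (tri scale a2 h2 b2 w)))
   = tri scale (a1+a2) (h1+h2) (b1+b2)"
  by (auto simp: tri_def fun_eq_iff algebra_simps scale_right_distrib scale_left_distrib)

lemma tri_id: "id = tri scale 1 0 1"
  by (auto simp: tri_def fun_eq_iff)

lemma tri_zero: "(\<lambda>w. (0, 0)) = tri scale 0 0 0"
  by (auto simp: tri_def fun_eq_iff)

lemma bmap_tri: "is_adj (bmap scale) (tri scale a h b) (tri scale b (-h) a)"
  by (auto simp: is_adj_def bmap_def tri_def algebra_simps scale_right_distrib scale_left_distrib)

lemma End_D:
  assumes "f \<in> End scale"
  shows "f (x, u) = (x * fst (f (1,0)) + fst (f (0,u)), scale x (snd (f (1,0))) + snd (f (0,u)))"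
proof -
  have add: "\<And>p q. f (p + q) = f p + f q" and sc: "\<And>c p. f (pscale scale c p) = pscale scale c (f p)"
    using assms unfolding End_def Vector_Spaces.linear_def module_hom_def module_hom_axioms_def by auto
  have "(x, u) = pscale scale x (1, 0) + (0, u)" by (simp add: pscale_def)
  hence "f (x,u) = pscale scale x (f (1,0)) + f (0,u)" using add sc by metis
  thus ?thesis by (simp add: pscale_def mult.commute plus_prod_def)
qed

lemma fst_zero:
  assumes ns: "\<And>u. \<exists>v. v \<notin> span {u}"
    and h: "\<And>v. scale c v = - scale (d v) u"
  shows "c = 0"
proof (rule ccontr)
  assume c: "c \<noteq> 0"
  obtain v where v: "v \<notin> span {u}" using ns by blast
  have "v = scale (inverse c) (scale c v)" using c by simp
  also have "\<dots> = scale (- (inverse c * d v)) u" using h[of v] by (simp add: scale_minus_right)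
  finally have "v \<in> span {u}" by (metis span_base singletonI span_scale)
  with v show False by blast
qed

lemma adj_form:
  assumes ns: "\<And>u. \<exists>v. v \<notin> span {u}"
    and f: "f \<in> End scale" and g: "g \<in> End scale" and adj: "is_adj (bmap scale) f g"
  shows "f = tri scale (fst (f (1,0))) (snd (f (1,0))) (fst (g (1,0)))
       \<and> g = tri scale (fst (g (1,0))) (- snd (f (1,0))) (fst (f (1,0)))"
proof -
  have A: "\<And>p q. bmap scale (f p) q = bmap scale p (g q)" using adj unfolding is_adj_def by blast
  have f0: "fst (f (0,u)) = 0" for u
  proof (rule fst_zero[OF ns])
    fix v show "scale (fst (f (0,u))) v = - scale (fst (g (0,v))) u"
      using A[of "(0,u)" "(0,v)"] by (simp add: bmap_def)
  qed
  have g0: "fst (g (0,v)) = 0" for v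
  proof (rule fst_zero[OF ns])
    fix u show "scale (fst (g (0,v))) u = - scale (fst (f (0,u))) v"
      using A[of "(0,u)" "(0,v)"] by (simp add: bmap_def)
  qed
  have g1: "snd (g (0,v)) = scale (fst (f (1,0))) v" for v
    using A[of "(1,0)" "(0,v)"] unfolding bmap_def g0 fst_conv snd_conv scale_zero_left scale_zero_right scale_one diff_0_right by simp
  have f1: "snd (f (0,u)) = scale (fst (g (1,0))) u" for u
    using A[of "(0,u)" "(1,0)"] unfolding bmap_def f0 fst_conv snd_conv scale_zero_left scale_zero_right scale_one diff_0_right diff_0 by simp
  have h1: "snd (g (1,0)) = - snd (f (1,0))"
    using A[of "(1,0)" "(1,0)"] unfolding bmap_def fst_conv snd_conv scale_zero_left scale_zero_right scale_one diff_0_right diff_0 by (simp add: eq_neg_iff_add_eq_0 add.commute)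
  have F: "f (x,u) = tri scale (fst (f (1,0))) (snd (f (1,0))) (fst (g (1,0))) (x,u)" for x u
  proof -
    have "f (x,u) = (x * fst (f (1,0)) + fst (f (0,u)), scale x (snd (f (1,0))) + snd (f (0,u)))" by (rule End_D[OF f])
    also have "... = (x * fst (f (1,0)), scale x (snd (f (1,0))) + scale (fst (g (1,0))) u)" by (simp only: f0 f1 add_0_right)
    also have "... = tri scale (fst (f (1,0))) (snd (f (1,0))) (fst (g (1,0))) (x,u)" by (simp only: tri_def fst_conv snd_conv mult.commute)
    finally show ?thesis .
  qed
  have G: "g (x,u) = tri scale (fst (g (1,0))) (- snd (f (1,0))) (fst (f (1,0))) (x,u)" for x u
  proof -
    have "g (x,u) = (x * fst (g (1,0)) + fst (g (0,u)), scale x (snd (g (1,0))) + snd (g (0,u)))" by (rule End_D[OF g])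
    also have "... = (x * fst (g (1,0)), scale x (- snd (f (1,0))) + scale (fst (f (1,0))) u)" by (simp only: g0 g1 h1 add_0_right)
    also have "... = tri scale (fst (g (1,0))) (- snd (f (1,0))) (fst (f (1,0))) (x,u)" by (simp only: tri_def fst_conv snd_conv mult.commute)
    finally show ?thesis .
  qed
  show ?thesis
  proof (intro conjI ext)
    fix p show "f p = tri scale (fst (f (1,0))) (snd (f (1,0))) (fst (g (1,0))) p"
      using F[of "fst p" "snd p"] by (simp only: prod.collapse)
  next
    fix p show "g p = tri scale (fst (g (1,0))) (- snd (f (1,0))) (fst (f (1,0))) p"
      using G[of "fst p" "snd p"] by (simp only: prod.collapse)
  qed
qed

end

locale L = vector_space scale for scale :: "'a::field \<Rightarrow> 'v::ab_group_add \<Rightarrow> 'v" +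
  assumes ns: "\<And>u. \<exists>v. v \<notin> span {u}"
begin

abbreviation "R \<equiv> Adj_ring scale (bmap scale)"
abbreviation "T \<equiv> {tri scale a h b | a h b. True}"

lemma u0: "\<exists>u0::'v. u0 \<noteq> 0"
  using ns[of 0] span_zero by metis

lemma tri_eq_iff: "tri scale a h b = tri scale a' h' b' \<longleftrightarrow> a = a' \<and> h = h' \<and> b = b'"
proof
  assume e: "tri scale a h b = tri scale a' h' b'"
  obtain u0 :: 'v where u: "u0 \<noteq> 0" using u0 by blast
  have "tri scale a h b (1,0) = tri scale a' h' b' (1,0)" "tri scale a h b (0,u0) = tri scale a' h' b' (0,u0)"
    using e by auto
  hence "a = a'" "h = h'" "scale b u0 = scale b' u0" by (auto simp: tri_def)
  thus "a = a' \<and> h = h' \<and> b = b'" using scale_right_imp_eq[OF u] by blast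
qed auto

lemma Adj_eq: "Adj scale (bmap scale) = T"
proof
  show "Adj scale (bmap scale) \<subseteq> T"
  proof
    fix f assume "f \<in> Adj scale (bmap scale)"
    then obtain g where "f \<in> End scale" "g \<in> End scale" "is_adj (bmap scale) f g" by (auto simp: Adj_def)
    from adj_form[OF ns this] show "f \<in> T" by blast
  qed
  show "T \<subseteq> Adj scale (bmap scale)"
    using tri_End bmap_tri by (auto simp: Adj_def) blast
qed

lemma adj_unique:
  assumes g: "g \<in> End scale" and a: "is_adj (bmap scale) (tri scale \<alpha> h \<beta>) g"
  shows "g = tri scale \<beta> (- h) \<alpha>"
proof -
  have e: "tri scale \<alpha> h \<beta> (1,0) = (\<alpha>, h)" by (simp add: tri_def)
  from adj_form[OF ns tri_End g a] e
  have "tri scale \<alpha> h \<beta> = tri scale \<alpha> h (fst (g (1,0)))" "g = tri scale (fst (g (1,0))) (- h) \<alpha>" by auto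
  thus ?thesis using tri_eq_iff by auto
qed

lemma adj_star_tri: "adj_star scale (bmap scale) (tri scale \<alpha> h \<beta>) = tri scale \<beta> (- h) \<alpha>"
  unfolding adj_star_def
  by (rule the_equality) (auto simp: tri_End bmap_tri adj_unique)

lemma R_carrier: "carrier R = T" by (simp add: Adj_ring_def Adj_eq)
lemma R_mult: "tri scale a1 h1 b1 \<otimes>\<^bsub>R\<^esub> tri scale a2 h2 b2 = tri scale (a1*a2) (scale a1 h2 + scale b2 h1) (b1*b2)"
  by (simp add: Adj_ring_def tri_comp)
lemma R_add: "tri scale a1 h1 b1 \<oplus>\<^bsub>R\<^esub> tri scale a2 h2 b2 = tri scale (a1+a2) (h1+h2) (b1+b2)"
  by (simp add: Adj_ring_def tri_add)
lemma R_one: "\<one>\<^bsub>R\<^esub> = tri scale 1 0 1" by (simp add: Adj_ring_def tri_id)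
lemma R_zero: "\<zero>\<^bsub>R\<^esub> = tri scale 0 0 0" by (simp add: Adj_ring_def tri_zero)

lemmas Rsimps = R_carrier R_mult R_add R_one R_zero tri_eq_iff

lemma ring_R: "ring R"
proof (rule ringI)
  show "abelian_group R"
  proof (rule abelian_groupI)
    fix x assume "x \<in> carrier R"
    then obtain a h b where x: "x = tri scale a h b" by (auto simp: Rsimps)
    show "\<exists>y\<in>carrier R. y \<oplus>\<^bsub>R\<^esub> x = \<zero>\<^bsub>R\<^esub>"
      by (rule bexI[of _ "tri scale (-a) (-h) (-b)"]) (auto simp: x Rsimps)
  qed (auto simp: Rsimps algebra_simps)
  show "monoid R"
    by (rule monoidI) (auto simp: Rsimps algebra_simps scale_right_distrib)
qed (auto simp: Rsimps algebra_simps scale_right_distrib)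

lemma R_neg: "\<ominus>\<^bsub>R\<^esub> tri scale a h b = tri scale (-a) (-h) (-b)"
proof -
  interpret ring R by (rule ring_R)
  show ?thesis by (rule minus_equality) (auto simp: Rsimps)
qed

lemma addsubI:
  assumes "H \<subseteq> carrier R" "H \<noteq> {}" "\<And>x. x \<in> H \<Longrightarrow> \<ominus>\<^bsub>R\<^esub> x \<in> H"
    "\<And>x y. x \<in> H \<Longrightarrow> y \<in> H \<Longrightarrow> x \<oplus>\<^bsub>R\<^esub> y \<in> H"
  shows "additive_subgroup H R"
proof -
  interpret ring R by (rule ring_R)
  show ?thesis
    by (rule additive_subgroupI, rule add.subgroupI) (use assms in \<open>auto simp: a_inv_def\<close>)
qed

lemma one_in_left_ideal:
  assumes "left_ideal J R" "tri scale 1 0 1 \<in> J"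
  shows "J = carrier R"
proof
  show "J \<subseteq> carrier R" using assms(1) additive_subgroup.a_subset by (auto simp: left_ideal_def)
  show "carrier R \<subseteq> J"
  proof
    fix w assume "w \<in> carrier R"
    then obtain a h b where w: "w = tri scale a h b" by (auto simp: Rsimps)
    have "w \<otimes>\<^bsub>R\<^esub> tri scale 1 0 1 \<in> J" using assms \<open>w \<in> carrier R\<close> by (auto simp: left_ideal_def)
    thus "w \<in> J" by (simp add: w Rsimps)
  qed
qed

lemma ideal_I1: "maximal_left_ideal {tri scale 0 h b | h b. True} R" (is "maximal_left_ideal ?I R")
proof -
  have li: "left_ideal ?I R"
    unfolding left_ideal_def
  proof
    show "additive_subgroup ?I R"
      by (rule addsubI) (auto simp: Rsimps R_neg)
    show "\<forall>a\<in>carrier R. \<forall>x\<in>?I. a \<otimes>\<^bsub>R\<^esub> x \<in> ?I" by (auto simp: Rsimps)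
  qed
  have ne: "?I \<noteq> carrier R"
  proof
    assume "?I = carrier R"
    hence "tri scale 1 0 1 \<in> ?I" by (auto simp: Rsimps)
    thus False by (auto simp: Rsimps)
  qed
  have "J = ?I \<or> J = carrier R" if J: "left_ideal J R" "?I \<subseteq> J" for J
  proof (cases "J = ?I")
    case False
    have sub: "J \<subseteq> carrier R" using J(1) additive_subgroup.a_subset by (auto simp: left_ideal_def)
    obtain x where x: "x \<in> J" "x \<notin> ?I" using False J(2) by blast
    then obtain a g b where xe: "x = tri scale a g b" using sub by (auto simp: Rsimps)
    have a: "a \<noteq> 0" using x xe by auto
    have "tri scale (1/a) 0 0 \<otimes>\<^bsub>R\<^esub> x \<in> J" using J(1) x(1) by (auto simp: left_ideal_def Rsimps)
    hence y: "tri scale 1 (scale (1/a) g) 0 \<in> J" using a by (simp add: xe Rsimps)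
    have z: "tri scale 0 (- scale (1/a) g) 1 \<in> J" using J(2) by blast
    have "tri scale 1 (scale (1/a) g) 0 \<oplus>\<^bsub>R\<^esub> tri scale 0 (- scale (1/a) g) 1 \<in> J"
      using y z J(1) additive_subgroup.a_closed by (auto simp: left_ideal_def)
    hence "tri scale 1 0 1 \<in> J" by (simp add: Rsimps)
    thus ?thesis using one_in_left_ideal J(1) by blast
  qed simp
  thus ?thesis using li ne by (auto simp: maximal_left_ideal_def)
qed

lemma ideal_I2: "maximal_left_ideal {tri scale a h 0 | a h. True} R" (is "maximal_left_ideal ?I R")
proof -
  have li: "left_ideal ?I R"
    unfolding left_ideal_def
  proof
    show "additive_subgroup ?I R"
      by (rule addsubI) (auto simp: Rsimps R_neg)
    show "\<forall>a\<in>carrier R. \<forall>x\<in>?I. a \<otimes>\<^bsub>R\<^esub> x \<in> ?I" by (auto simp: Rsimps)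
  qed
  have ne: "?I \<noteq> carrier R"
  proof
    assume "?I = carrier R"
    hence "tri scale 1 0 1 \<in> ?I" by (auto simp: Rsimps)
    thus False by (auto simp: Rsimps)
  qed
  have "J = ?I \<or> J = carrier R" if J: "left_ideal J R" "?I \<subseteq> J" for J
  proof (cases "J = ?I")
    case False
    have sub: "J \<subseteq> carrier R" using J(1) additive_subgroup.a_subset by (auto simp: left_ideal_def)
    obtain x where x: "x \<in> J" "x \<notin> ?I" using False J(2) by blast
    then obtain a g b where xe: "x = tri scale a g b" using sub by (auto simp: Rsimps)
    have b: "b \<noteq> 0" using x xe by auto
    have "tri scale 0 0 (1/b) \<otimes>\<^bsub>R\<^esub> x \<in> J" using J(1) x(1) by (auto simp: left_ideal_def Rsimps)
    hence y: "tri scale 0 0 1 \<in> J" using b by (simp add: xe Rsimps)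
    have z: "tri scale 1 0 0 \<in> J" using J(2) by blast
    have "tri scale 0 0 1 \<oplus>\<^bsub>R\<^esub> tri scale 1 0 0 \<in> J"
      using y z J(1) additive_subgroup.a_closed by (auto simp: left_ideal_def)
    hence "tri scale 1 0 1 \<in> J" by (simp add: Rsimps)
    thus ?thesis using one_in_left_ideal J(1) by blast
  qed simp
  thus ?thesis using li ne by (auto simp: maximal_left_ideal_def)
qed

lemma N_in_max:
  assumes I: "maximal_left_ideal I R"
  shows "tri scale 0 h 0 \<in> I"
proof (rule ccontr)
  assume nI: "tri scale 0 h 0 \<notin> I"
  have liI: "left_ideal I R" and neI: "I \<noteq> carrier R"
    and mx: "\<And>J. left_ideal J R \<Longrightarrow> I \<subseteq> J \<Longrightarrow> J = I \<or> J = carrier R"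
    using I by (auto simp: maximal_left_ideal_def)
  have asI: "additive_subgroup I R" using liI by (simp add: left_ideal_def)
  have subI: "I \<subseteq> carrier R" using additive_subgroup.a_subset[OF asI] .
  have lm: "\<And>a x. a \<in> carrier R \<Longrightarrow> x \<in> I \<Longrightarrow> a \<otimes>\<^bsub>R\<^esub> x \<in> I" using liI by (auto simp: left_ideal_def)
  have addI: "\<And>x y. x \<in> I \<Longrightarrow> y \<in> I \<Longrightarrow> x \<oplus>\<^bsub>R\<^esub> y \<in> I" using additive_subgroup.a_closed[OF asI] .
  have negI: "\<And>x. x \<in> I \<Longrightarrow> \<ominus>\<^bsub>R\<^esub> x \<in> I" using additive_subgroup.a_inv_closed[OF asI] .
  have zI: "tri scale 0 0 0 \<in> I" using additive_subgroup.zero_closed[OF asI] by (simp add: R_zero)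
  define J where "J = {tri scale a (g + scale c h) b | a g b c. tri scale a g b \<in> I}"
  have liJ: "left_ideal J R"
    unfolding left_ideal_def
  proof
    show "additive_subgroup J R"
    proof (rule addsubI)
      show "J \<subseteq> carrier R" by (auto simp: J_def Rsimps)
      show "J \<noteq> {}" using zI unfolding J_def by blast
      show "\<ominus>\<^bsub>R\<^esub> x \<in> J" if "x \<in> J" for x
      proof -
        obtain a g b c where x: "x = tri scale a (g + scale c h) b" "tri scale a g b \<in> I" using \<open>x \<in> J\<close> by (auto simp: J_def)
        have "tri scale (-a) (-g) (-b) \<in> I" using negI[OF x(2)] by (simp add: R_neg)
        moreover have "\<ominus>\<^bsub>R\<^esub> x = tri scale (-a) (-g + scale (-c) h) (-b)"
          by (simp add: x R_neg scale_minus_left)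
        ultimately show ?thesis unfolding J_def by blast
      qed
      show "x \<oplus>\<^bsub>R\<^esub> y \<in> J" if "x \<in> J" "y \<in> J" for x y
      proof -
        obtain a g b c where x: "x = tri scale a (g + scale c h) b" "tri scale a g b \<in> I" using \<open>x \<in> J\<close> by (auto simp: J_def)
        obtain a' g' b' c' where y: "y = tri scale a' (g' + scale c' h) b'" "tri scale a' g' b' \<in> I" using \<open>y \<in> J\<close> by (auto simp: J_def)
        have "tri scale (a+a') (g+g') (b+b') \<in> I" using addI[OF x(2) y(2)] by (simp add: R_add)
        moreover have "x \<oplus>\<^bsub>R\<^esub> y = tri scale (a+a') ((g+g') + scale (c+c') h) (b+b')"
          by (simp add: x y R_add scale_left_distrib algebra_simps)
        ultimately show ?thesis unfolding J_def by blast
      qed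
    qed
    show "\<forall>r\<in>carrier R. \<forall>x\<in>J. r \<otimes>\<^bsub>R\<^esub> x \<in> J"
    proof (intro ballI)
      fix r x assume r: "r \<in> carrier R" and "x \<in> J"
      obtain a g b c where x: "x = tri scale a (g + scale c h) b" "tri scale a g b \<in> I" using \<open>x \<in> J\<close> by (auto simp: J_def)
      obtain a1 h1 b1 where re: "r = tri scale a1 h1 b1" using r by (auto simp: Rsimps)
      have "r \<otimes>\<^bsub>R\<^esub> tri scale a g b \<in> I" using lm[OF r x(2)] .
      hence "tri scale (a1*a) (scale a1 g + scale b h1) (b1*b) \<in> I" by (simp add: re R_mult)
      moreover have "r \<otimes>\<^bsub>R\<^esub> x = tri scale (a1*a) ((scale a1 g + scale b h1) + scale (a1*c) h) (b1*b)"
        by (simp add: x re R_mult scale_right_distrib algebra_simps)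
      ultimately show "r \<otimes>\<^bsub>R\<^esub> x \<in> J" unfolding J_def by blast
    qed
  qed
  have IJ: "I \<subseteq> J"
  proof
    fix x assume "x \<in> I"
    then obtain a g b where x: "x = tri scale a g b" using subI by (auto simp: Rsimps)
    have "x = tri scale a (g + scale 0 h) b" by (simp add: x)
    thus "x \<in> J" using \<open>x \<in> I\<close> x unfolding J_def
      by (intro CollectI exI[of _ a] exI[of _ g] exI[of _ b] exI[of _ 0]) simp
  qed
  have "tri scale 0 (0 + scale 1 h) 0 \<in> J" using zI unfolding J_def by blast
  hence "J \<noteq> I" using nI by auto
  hence "J = carrier R" using mx[OF liJ IJ] by blast
  hence "tri scale 1 0 1 \<in> J" by (auto simp: Rsimps)
  then obtain a g b c where e: "tri scale 1 0 1 = tri scale a (g + scale c h) b" "tri scale a g b \<in> I"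
    unfolding J_def by blast
  hence "tri scale 1 (- scale c h) 1 \<in> I" by (auto simp: tri_eq_iff add_eq_0_iff2)
  hence "tri scale 1 (scale c h) 1 \<otimes>\<^bsub>R\<^esub> tri scale 1 (- scale c h) 1 \<in> I" by (intro lm) (auto simp: Rsimps)
  hence "tri scale 1 0 1 \<in> I" by (simp add: R_mult)
  hence "I = carrier R" using one_in_left_ideal liI by blast
  with neI show False by blast
qed

lemma rad: "jacobson_radical R = {tri scale 0 h 0 | h. True}"
proof
  show "jacobson_radical R \<subseteq> {tri scale 0 h 0 | h. True}"
  proof
    fix x assume x: "x \<in> jacobson_radical R"
    then obtain a h b where xe: "x = tri scale a h b" by (auto simp: jacobson_radical_def Rsimps)
    have "x \<in> {tri scale 0 h b | h b. True}" "x \<in> {tri scale a h 0 | a h. True}"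
      using x ideal_I1 ideal_I2 by (auto simp: jacobson_radical_def)
    thus "x \<in> {tri scale 0 h 0 | h. True}" by (auto simp: xe tri_eq_iff)
  qed
  show "{tri scale 0 h 0 | h. True} \<subseteq> jacobson_radical R"
    using N_in_max by (auto simp: jacobson_radical_def Rsimps)
qed

abbreviation "N \<equiv> {tri scale 0 h 0 | h. True}"
definition K where "K a b = {tri scale a h b | h. True}"

lemma coset: "N +>\<^bsub>R\<^esub> tri scale a g b = K a b"
proof
  show "N +>\<^bsub>R\<^esub> tri scale a g b \<subseteq> K a b"
    unfolding a_r_coset_def r_coset_def K_def by (auto simp: R_add)
  show "K a b \<subseteq> N +>\<^bsub>R\<^esub> tri scale a g b"
  proof
    fix x assume "x \<in> K a b"
    then obtain h where x: "x = tri scale a h b" by (auto simp: K_def)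
    have e: "x = tri scale 0 (h - g) 0 \<oplus>\<^bsub>R\<^esub> tri scale a g b"
      by (simp add: R_add x)
    show "x \<in> N +>\<^bsub>R\<^esub> tri scale a g b"
      unfolding a_r_coset_def r_coset_def
      by (rule UN_I[of "tri scale 0 (h - g) 0"]) (auto simp: e)
  qed
qed

lemmas coset' = coset[simplified]

lemma K_inj: "K a b = K a' b' \<longleftrightarrow> a = a' \<and> b = b'"
proof
  assume "K a b = K a' b'"
  hence "tri scale a 0 b \<in> K a' b'" by (auto simp: K_def)
  thus "a = a' \<and> b = b'" by (auto simp: K_def tri_eq_iff)
qed simp

lemma Q_carrier: "carrier (R Quot N) = {K a b | a b. True}"
proof -
  have "a_rcosets\<^bsub>R\<^esub> N = (\<Union>x\<in>carrier R. {N +>\<^bsub>R\<^esub> x})" unfolding A_RCOSETS_def RCOSETS_def a_r_coset_def by simp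
  also have "\<dots> = {K a b | a b. True}"
  proof
    show "(\<Union>x\<in>carrier R. {N +>\<^bsub>R\<^esub> x}) \<subseteq> {K a b | a b. True}"
      by (auto simp: R_carrier coset coset') blast
    show "{K a b | a b. True} \<subseteq> (\<Union>x\<in>carrier R. {N +>\<^bsub>R\<^esub> x})"
    proof
      fix C assume "C \<in> {K a b | a b. True}"
      then obtain a b where C: "C = K a b" by blast
      show "C \<in> (\<Union>x\<in>carrier R. {N +>\<^bsub>R\<^esub> x})"
        by (rule UN_I[where a="tri scale a 0 b"]) (auto simp: R_carrier coset coset' C)
    qed
  qed
  finally show ?thesis by (simp add: FactRing_def)
qed

lemma Q_one: "\<one>\<^bsub>R Quot N\<^esub> = K 1 1"
  by (simp add: FactRing_def R_one coset coset')

lemma Q_mult: "K a1 b1 \<otimes>\<^bsub>R Quot N\<^esub> K a2 b2 = K (a1*a2) (b1*b2)"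
proof -
  have "rcoset_mult R N (K a1 b1) (K a2 b2) = K (a1*a2) (b1*b2)"
    unfolding rcoset_mult_def
  proof -
    have "\<And>x y. x \<in> K a1 b1 \<Longrightarrow> y \<in> K a2 b2 \<Longrightarrow> N +>\<^bsub>R\<^esub> (x \<otimes>\<^bsub>R\<^esub> y) = K (a1*a2) (b1*b2)"
      by (auto simp: K_def R_mult coset coset')
    moreover have "tri scale a1 0 b1 \<in> K a1 b1" "tri scale a2 0 b2 \<in> K a2 b2" by (auto simp: K_def)
    ultimately show "(\<Union>x\<in>K a1 b1. \<Union>y\<in>K a2 b2. N +>\<^bsub>R\<^esub> (x \<otimes>\<^bsub>R\<^esub> y)) = K (a1*a2) (b1*b2)"
      by blast
  qed
  thus ?thesis by (simp add: FactRing_def)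
qed

lemma Q_add: "K a1 b1 \<oplus>\<^bsub>R Quot N\<^esub> K a2 b2 = K (a1+a2) (b1+b2)"
proof -
  have "set_add R (K a1 b1) (K a2 b2) = K (a1+a2) (b1+b2)"
  proof
    show "set_add R (K a1 b1) (K a2 b2) \<subseteq> K (a1+a2) (b1+b2)"
      unfolding set_add_def set_mult_def K_def by (auto simp: R_add)
    show "K (a1+a2) (b1+b2) \<subseteq> set_add R (K a1 b1) (K a2 b2)"
    proof
      fix x assume "x \<in> K (a1+a2) (b1+b2)"
      then obtain h where x: "x = tri scale (a1+a2) h (b1+b2)" by (auto simp: K_def)
      show "x \<in> set_add R (K a1 b1) (K a2 b2)"
        unfolding set_add_def set_mult_def
      proof (rule UN_I[where a="tri scale a1 h b1"])
        show "tri scale a1 h b1 \<in> K a1 b1" by (auto simp: K_def)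
        show "x \<in> (\<Union>k\<in>K a2 b2. {tri scale a1 h b1 \<otimes>\<^bsub>add_monoid R\<^esub> k})"
        proof (rule UN_I[where a="tri scale a2 0 b2"])
          show "tri scale a2 0 b2 \<in> K a2 b2" by (auto simp: K_def)
        qed (simp add: x R_add)
      qed
    qed
  qed
  thus ?thesis by (simp add: FactRing_def)
qed

lemmas Qs = Q_carrier Q_one Q_mult Q_add
lemmas Qs' = Qs[simplified]

definition phi :: "('a \<times> 'v \<Rightarrow> 'a \<times> 'v) set \<Rightarrow> 'a \<times> 'a" where
  "phi C = (THE p. C = K (fst p) (snd p))"

lemma phi_K: "phi (K a b) = (a, b)"
  unfolding phi_def by (rule the_equality) (auto simp: K_inj)

lemma iso: "phi \<in> ring_iso (R Quot N) (kk_ring :: ('a \<times> 'a) ring)"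
  unfolding ring_iso_def
proof (intro CollectI conjI)
  show "phi \<in> ring_hom (R Quot N) kk_ring"
    unfolding ring_hom_def
    by (auto simp: Qs Qs' phi_K kk_ring_def)
  show "bij_betw phi (carrier (R Quot N)) (carrier kk_ring)"
    unfolding bij_betw_def inj_on_def
    by (auto simp: Qs Qs' phi_K kk_ring_def image_def) (metis phi_K)
qed

lemma exch_prop: "f \<in> Adj scale (bmap scale) \<Longrightarrow>
   phi (N +>\<^bsub>R\<^esub> adj_star scale (bmap scale) f) = exch (phi (N +>\<^bsub>R\<^esub> f))"
  by (auto simp: Adj_eq adj_star_tri coset coset' phi_K exch_def)

lemma perp: "perp_indecomposable scale (bmap scale)"
proof -
  interpret P: vector_space "pscale scale" by (rule vs_pscale)
  have False if X: "X \<noteq> {UNIV}" "\<forall>S \<in> X. P.subspace S"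
      "\<forall>S \<in> X. \<forall>T \<in> X. S \<noteq> T \<longrightarrow> (\<forall>x \<in> S. \<forall>y \<in> T. bmap scale x y = 0)"
      "P.span (\<Union>X) = UNIV" "\<forall>Y. Y \<subset> X \<longrightarrow> P.span (\<Union>Y) \<noteq> UNIV" for X
  proof -
    have "\<exists>S0\<in>X. \<exists>w\<in>S0. fst w \<noteq> 0"
    proof (rule ccontr)
      assume "\<not> ?thesis"
      hence sub: "\<Union>X \<subseteq> {w. fst w = 0}" by auto
      have "P.subspace {w. fst w = 0}" unfolding P.subspace_def by (auto simp: pscale_def)
      from P.span_minimal[OF sub this] X(4) have "(1::'a, 0::'v) \<in> {w. fst w = 0}" by blast
      thus False by simp
    qed
    then obtain S0 x0 u0 where S0: "S0 \<in> X" "(x0, u0) \<in> S0" "x0 \<noteq> 0" by auto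
    have TS: "T \<subseteq> S0" if T: "T \<in> X" for T
    proof (cases "T = S0")
      case False
      show ?thesis
      proof
        fix p assume p: "p \<in> T"
        obtain y v where pe: "p = (y, v)" by (cases p)
        have "bmap scale (x0, u0) (y, v) = 0" using X(3) S0 T False p pe by blast
        hence e: "scale x0 v = scale y u0" by (simp add: bmap_def)
        have "v = scale (inverse x0) (scale x0 v)" using S0(3) by simp
        also have "\<dots> = scale (y / x0) u0" using e by (simp add: divide_inverse mult.commute)
        finally have "p = pscale scale (y / x0) (x0, u0)" using S0(3) by (simp add: pe pscale_def)
        thus "p \<in> S0" using P.subspace_scale X(2) S0 by metis
      qed
    qed simp
    hence U: "\<Union>X = S0" using S0(1) by blast
    show False
    proof (cases "X = {S0}")
      case True
      have "S0 = UNIV" using X(4) U X(2) S0(1) P.span_eq_iff by metis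
      thus False using True X(1) by simp
    next
      case False
      hence "{S0} \<subset> X" using S0(1) by blast
      moreover have "P.span (\<Union>{S0}) = UNIV" using X(4) U by simp
      ultimately show False using X(5) by blast
    qed
  qed
  thus ?thesis unfolding perp_indecomposable_def
    by (intro notI) (elim exE conjE, metis)
qed

end

theorem lemma7p13:
  fixes s :: "'a::field \<Rightarrow> 'v::ab_group_add \<Rightarrow> 'v"
  assumes "vector_space s"
    and "vector_space.dim s (UNIV :: 'v set) > 1"
  shows "alternating (bmap s)
    \<and> Adj s (bmap s) = {tri s \<alpha> h \<beta> | \<alpha> h \<beta>. True}
    \<and> (\<forall>\<alpha> h \<beta>. adj_star s (bmap s) (tri s \<alpha> h \<beta>) = tri s \<beta> (- h) \<alpha>
                 \<and> tri s \<beta> (- h) \<alpha> \<in> End s \<and> is_adj (bmap s) (tri s \<alpha> h \<beta>) (tri s \<beta> (- h) \<alpha>)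
                 \<and> (\<forall>g \<in> End s. is_adj (bmap s) (tri s \<alpha> h \<beta>) g \<longrightarrow> g = tri s \<beta> (- h) \<alpha>))
    \<and> jacobson_radical (Adj_ring s (bmap s)) = {tri s 0 h 0 | h. True}
    \<and> (\<exists>\<phi>. \<phi> \<in> ring_iso (Adj_ring s (bmap s) Quot jacobson_radical (Adj_ring s (bmap s))) (kk_ring :: ('a \<times> 'a) ring)
           \<and> (\<forall>f \<in> Adj s (bmap s).
                \<phi> (jacobson_radical (Adj_ring s (bmap s)) +>\<^bsub>Adj_ring s (bmap s)\<^esub> adj_star s (bmap s) f)
                = exch (\<phi> (jacobson_radical (Adj_ring s (bmap s)) +>\<^bsub>Adj_ring s (bmap s)\<^esub> f))))
    \<and> perp_indecomposable s (bmap s)"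
proof -
  have ns: "\<exists>v. v \<notin> module.span s {u}" for u
  proof (rule ccontr)
    assume "\<not> ?thesis"
    hence "UNIV \<subseteq> module.span s {u}" by auto
    from vector_space.dim_le_card[OF assms(1) this] have "vector_space.dim s (UNIV::'v set) \<le> 1" by simp
    with assms(2) show False by simp
  qed
  interpret L s by (rule L.intro[OF assms(1)], unfold_locales, rule ns)
  show ?thesis
  proof (intro conjI allI ballI impI)
    show "alternating (bmap s)" by (simp add: alternating_def bmap_def)
    show "Adj s (bmap s) = {tri s \<alpha> h \<beta> | \<alpha> h \<beta>. True}" by (rule Adj_eq)
    fix \<alpha> h \<beta>
    show "adj_star s (bmap s) (tri s \<alpha> h \<beta>) = tri s \<beta> (- h) \<alpha>" by (rule adj_star_tri)
    show "tri s \<beta> (- h) \<alpha> \<in> End s" by (rule tri_End)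
    show "is_adj (bmap s) (tri s \<alpha> h \<beta>) (tri s \<beta> (- h) \<alpha>)" by (rule bmap_tri)
    show "\<And>g. g \<in> End s \<Longrightarrow> is_adj (bmap s) (tri s \<alpha> h \<beta>) g \<Longrightarrow> g = tri s \<beta> (- h) \<alpha>"
      by (rule adj_unique)
  next
    show "jacobson_radical (Adj_ring s (bmap s)) = {tri s 0 h 0 | h. True}" by (rule rad)
  next
    show "\<exists>\<phi>. \<phi> \<in> ring_iso (Adj_ring s (bmap s) Quot jacobson_radical (Adj_ring s (bmap s))) (kk_ring :: ('a \<times> 'a) ring)
           \<and> (\<forall>f \<in> Adj s (bmap s).
                \<phi> (jacobson_radical (Adj_ring s (bmap s)) +>\<^bsub>Adj_ring s (bmap s)\<^esub> adj_star s (bmap s) f)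
                = exch (\<phi> (jacobson_radical (Adj_ring s (bmap s)) +>\<^bsub>Adj_ring s (bmap s)\<^esub> f)))"
      unfolding rad using iso exch_prop by blast
  next
    show "perp_indecomposable s (bmap s)" by (rule perp)
  qed
qed

end
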